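(* Suppose $H$ satisfies (B1) and (B2), and for $\alpha>0$ let $v^\alpha\in C(\mathbb{T}^d)\otimes\mathcal{B}(I)$ be the viscosity solution of (DP) (the one constructed by Perron's method, which satisfies $-M/\alpha\le v^\alpha\le M/\alpha$ with $M:=\sup_{\mathbb{T}^d\times I}|H(x,0,\xi)|$). Then for each $\alpha>0$ there exists $L_\alpha>0$ such that $|v^\alpha(x,\xi)-v^\alpha(y,\xi)|\le L_\alpha|x-y|$ for all $x,y\in\mathbb{T}^d$, $\xi\in I$.
   Context: $I\subset\mathbb{R}$ finite interval, $|I|=1$; $k$ Borel measurable on $I\times I$ with $0<k_0\le k\le k_1$. $H\in C(\mathbb{T}^d\times\mathbb{R}^d)\otimes\mathcal{B}(I)$ with $H(\cdot,p,\cdot)$ bounded for each $p$. (DP): $\alpha v(x,\xi)+H(x,Dv(x,\xi),\xi)+\int_I k(\xi,\eta)(v(x,\xi)-v(x,\eta))d\eta=0$ in $\mathbb{T}^d\times I$, understood in the viscosity sense (test functions $\phi\in C^1(\mathbb{T}^d)$ touching $v(\cdot,\xi)$ for fixed $\xi$). (B1): $C_1|p|^m-C_2\le H(x,p,\xi)$ for constants $C_1,C_2>0$, $m>1$. (B2): for each $R>0$ a modulus $\omega_R$ with $|H(x,p,\xi)-H(y,p,\xi)|\le\omega_R(|x-y|)$ for $|p|\le R$. $C(\mathbb{T}^d)\otimes\mathcal{B}(I)$: functions continuous in $x$ for each $\xi$ and Borel in $\xi$ for each $x$. *)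

theory Defs
  imports "HOL-Analysis.Analysis"
begin

text \<open>Functions on the torus T^d = R^d / Z^d are represented as Z^d-periodic
  functions on R^d (type real^'n, with d = CARD('n)).\<close>

definition Zd_periodic :: "(real^'n \<Rightarrow> 'b) \<Rightarrow> bool" where
  "Zd_periodic f \<longleftrightarrow> (\<forall>x z. (\<forall>i. z $ i \<in> \<int>) \<longrightarrow> f (x + z) = f x)"

definition C1_torus :: "(real^'n \<Rightarrow> real) \<Rightarrow> (real^'n \<Rightarrow> real^'n) \<Rightarrow> bool" where
  "C1_torus phi Dphi \<longleftrightarrow> Zd_periodic phi
     \<and> (\<forall>x. (phi has_derivative (\<lambda>h. Dphi x \<bullet> h)) (at x))
     \<and> continuous_on UNIV Dphi"

definition C_tensor_B :: "real set \<Rightarrow> (real^'n \<Rightarrow> real \<Rightarrow> real) \<Rightarrow> bool" where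
  "C_tensor_B I v \<longleftrightarrow>
     (\<forall>\<xi>\<in>I. continuous_on UNIV (\<lambda>x. v x \<xi>) \<and> Zd_periodic (\<lambda>x. v x \<xi>))
     \<and> (\<forall>x. set_borel_measurable borel I (\<lambda>\<xi>. v x \<xi>))"

definition coupling :: "real set \<Rightarrow> (real \<Rightarrow> real \<Rightarrow> real) \<Rightarrow> (real^'n \<Rightarrow> real \<Rightarrow> real)
    \<Rightarrow> real^'n \<Rightarrow> real \<Rightarrow> real" where
  "coupling I k v x \<xi> = (LINT \<eta>:I|lborel. k \<xi> \<eta> * (v x \<xi> - v x \<eta>))"

definition visc_subsol ::
  "real \<Rightarrow> (real^'n \<Rightarrow> real^'n \<Rightarrow> real \<Rightarrow> real) \<Rightarrow> real set \<Rightarrow> (real \<Rightarrow> real \<Rightarrow> real)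
    \<Rightarrow> (real^'n \<Rightarrow> real \<Rightarrow> real) \<Rightarrow> bool" where
  "visc_subsol \<alpha> H I k v \<longleftrightarrow>
     (\<forall>\<xi>\<in>I. \<forall>phi Dphi x0. C1_torus phi Dphi
        \<and> (\<exists>e>0. \<forall>x\<in>ball x0 e. v x \<xi> - phi x \<le> v x0 \<xi> - phi x0)
        \<longrightarrow> \<alpha> * v x0 \<xi> + H x0 (Dphi x0) \<xi> + coupling I k v x0 \<xi> \<le> 0)"

definition visc_supersol ::
  "real \<Rightarrow> (real^'n \<Rightarrow> real^'n \<Rightarrow> real \<Rightarrow> real) \<Rightarrow> real set \<Rightarrow> (real \<Rightarrow> real \<Rightarrow> real)
    \<Rightarrow> (real^'n \<Rightarrow> real \<Rightarrow> real) \<Rightarrow> bool" where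
  "visc_supersol \<alpha> H I k v \<longleftrightarrow>
     (\<forall>\<xi>\<in>I. \<forall>phi Dphi x0. C1_torus phi Dphi
        \<and> (\<exists>e>0. \<forall>x\<in>ball x0 e. v x \<xi> - phi x \<ge> v x0 \<xi> - phi x0)
        \<longrightarrow> \<alpha> * v x0 \<xi> + H x0 (Dphi x0) \<xi> + coupling I k v x0 \<xi> \<ge> 0)"

definition visc_sol where
  "visc_sol \<alpha> H I k v \<longleftrightarrow> visc_subsol \<alpha> H I k v \<and> visc_supersol \<alpha> H I k v"

end

theory Submission imports Defs begin
definition psi :: "real^'n \<Rightarrow> real^'n \<Rightarrow> real" where
 "psi y x = (\<Sum>i\<in>UNIV. (sin (pi * (x$i - y$i)))\<^sup>2)"
definition Dpsi :: "real^'n \<Rightarrow> real^'n \<Rightarrow> real^'n" where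
 "Dpsi y x = (\<chi> i. 2 * pi * sin (pi*(x$i-y$i)) * cos(pi*(x$i-y$i)))"
definition gf :: "real \<Rightarrow> real^'n \<Rightarrow> real^'n \<Rightarrow> real" where
 "gf e y x = sqrt (psi y x + e\<^sup>2)"

lemma psi_deriv: "(psi y has_derivative (\<lambda>h. Dpsi y x \<bullet> h)) (at x)"
proof -
  have "((\<lambda>x. \<Sum>i\<in>UNIV. (sin (pi * (x$i - y$i)))\<^sup>2) has_derivative
     (\<lambda>h. \<Sum>i\<in>UNIV. 2 * pi * sin (pi*(x$i-y$i)) * cos(pi*(x$i-y$i)) * h$i)) (at x)"
    apply (rule derivative_eq_intros bounded_linear.has_derivative[OF bounded_linear_vec_nth] has_derivative_ident)+
    apply (auto simp: algebra_simps)
    done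
  then show ?thesis unfolding psi_def[abs_def] Dpsi_def inner_vec_def by (simp add: mult.commute)
qed

lemma psi_nonneg: "0 \<le> psi y x"
  unfolding psi_def by (auto intro: sum_nonneg)

lemma gf_pos: "0 < e \<Longrightarrow> 0 < gf e y x"
  unfolding gf_def using psi_nonneg[of y x] by (simp add: add_nonneg_pos)

lemma sin_sq_shift: "(z::real) \<in> \<int> \<Longrightarrow> (sin (pi * (a + z)))\<^sup>2 = (sin (pi * a))\<^sup>2"
proof -
  assume "z \<in> \<int>" then obtain n where n: "z = of_int n" by (auto elim: Ints_cases)
  have s: "sin (of_int n * pi) = 0" using sin_zero_iff_int2 by blast
  have c: "(cos (of_int n * pi))\<^sup>2 = 1" using sin_cos_squared_add[of "of_int n * pi"] s by simp
  have "sin (pi * (a + z)) = sin (pi * a) * cos (of_int n * pi)"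
    by (simp add: n distrib_left sin_add s mult.commute)
  then show ?thesis by (simp add: power_mult_distrib c)
qed

lemma psi_per: "(\<forall>i. z $ i \<in> \<int>) \<Longrightarrow> psi y (x + z) = psi y x"
  unfolding psi_def
  by (intro sum.cong refl) (metis (no_types) add_diff_eq diff_add_eq sin_sq_shift vector_add_component)

lemma C1_g:
  assumes e: "0 < e"
  shows "C1_torus (\<lambda>x. K * gf e y x) (\<lambda>x. (K / (2 * gf e y x)) *\<^sub>R Dpsi y x)"
  unfolding C1_torus_def
proof (intro conjI allI)
  show "Zd_periodic (\<lambda>x. K * gf e y x)"
    unfolding Zd_periodic_def gf_def by (simp add: psi_per)
next
  fix x
  have pos: "0 < psi y x + e\<^sup>2" using psi_nonneg[of y x] e by (simp add: add_nonneg_pos)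
  have "((\<lambda>x. K * sqrt (psi y x + e\<^sup>2)) has_derivative
        (\<lambda>h. K * (inverse (sqrt (psi y x + e\<^sup>2)) / 2 * (Dpsi y x \<bullet> h)))) (at x)"
    by (rule derivative_eq_intros psi_deriv refl pos)+ (simp add: mult.commute)
  then show "((\<lambda>x. K * gf e y x) has_derivative (\<lambda>h. ((K / (2 * gf e y x)) *\<^sub>R Dpsi y x) \<bullet> h)) (at x)"
    unfolding gf_def by (simp add: field_simps)
next
  have cpsi: "continuous_on UNIV (psi y)"
    unfolding psi_def by (intro continuous_intros)
  show "continuous_on UNIV (\<lambda>x. (K / (2 * gf e y x)) *\<^sub>R Dpsi y x)"
    unfolding gf_def Dpsi_def
    apply (intro continuous_intros cpsi)
    using gf_pos[OF e] unfolding gf_def by (metis less_irrefl mult_eq_0_iff zero_neq_numeral)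
qed

lemma psi_self: "psi y y = 0"
  unfolding psi_def by simp

lemma gf_self: "0 < e \<Longrightarrow> gf e y y = e"
  unfolding gf_def psi_self by simp

lemma term_le_psi: "(sin (pi * (x$i - y$i)))\<^sup>2 \<le> psi y x"
  unfolding psi_def by (rule member_le_sum) auto

lemma norm_sq_cart: "(norm (x::real^'n))\<^sup>2 = (\<Sum>i\<in>UNIV. (x$i)\<^sup>2)"
  unfolding power2_norm_eq_inner inner_vec_def by (simp add: power2_eq_square)

lemma norm_Dpsi_sq: "(norm (Dpsi y x))\<^sup>2 = (\<Sum>i\<in>UNIV. (2 * pi * sin (pi*(x$i-y$i)) * cos(pi*(x$i-y$i)))\<^sup>2)"
  unfolding norm_sq_cart Dpsi_def by simp

lemma Dpsi_lower:
  assumes "psi y x \<le> 1/4"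
  shows "4 * psi y x \<le> (norm (Dpsi y x))\<^sup>2"
proof -
  have "4 * psi y x = (\<Sum>i\<in>UNIV. 4 * (sin (pi*(x$i-y$i)))\<^sup>2)"
    unfolding psi_def by (simp add: sum_distrib_left)
  also have "\<dots> \<le> (\<Sum>i\<in>UNIV. (2 * pi * sin (pi*(x$i-y$i)) * cos(pi*(x$i-y$i)))\<^sup>2)"
  proof (rule sum_mono)
    fix i
    define s where "s = sin (pi*(x$i-y$i))"
    define c where "c = cos (pi*(x$i-y$i))"
    have s2: "s\<^sup>2 \<le> 1/4" using term_le_psi[of x i y] assms unfolding s_def by linarith
    have sc: "s\<^sup>2 + c\<^sup>2 = 1" unfolding s_def c_def by simp
    have c2: "3/4 \<le> c\<^sup>2" using s2 sc by linarith
    have p: "2\<^sup>2 \<le> pi\<^sup>2" using pi_gt3 by (intro power_mono) auto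
    have "4 * s\<^sup>2 \<le> 4 * (pi\<^sup>2 * c\<^sup>2) * s\<^sup>2"
    proof -
      have "2\<^sup>2 * (3/4) \<le> pi\<^sup>2 * c\<^sup>2" using p c2 by (intro mult_mono) auto
      then have "1 \<le> pi\<^sup>2 * c\<^sup>2" by simp
      then have "1 * s\<^sup>2 \<le> (pi\<^sup>2 * c\<^sup>2) * s\<^sup>2" by (intro mult_right_mono) auto
      then show ?thesis by (simp add: algebra_simps)
    qed
    also have "\<dots> = (2 * pi * s * c)\<^sup>2" by (simp add: power_mult_distrib)
    finally show "4 * (sin (pi*(x$i-y$i)))\<^sup>2 \<le> (2 * pi * sin (pi*(x$i-y$i)) * cos(pi*(x$i-y$i)))\<^sup>2"
      unfolding s_def c_def .
  qed
  finally show ?thesis unfolding norm_Dpsi_sq .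
qed

lemma psi_upper: "psi y x \<le> pi\<^sup>2 * (dist x y)\<^sup>2"
proof -
  have "psi y x \<le> (\<Sum>i\<in>UNIV. pi\<^sup>2 * (x$i - y$i)\<^sup>2)"
    unfolding psi_def
  proof (rule sum_mono)
    fix i
    have "\<bar>sin (pi * (x$i - y$i))\<bar> \<le> \<bar>pi * (x$i - y$i)\<bar>" by (rule abs_sin_x_le_abs_x)
    then have "(sin (pi * (x$i - y$i)))\<^sup>2 \<le> (pi * (x$i - y$i))\<^sup>2"
      by (metis abs_ge_zero power2_abs power_mono)
    then show "(sin (pi * (x$i - y$i)))\<^sup>2 \<le> pi\<^sup>2 * (x$i - y$i)\<^sup>2" by (simp add: power_mult_distrib)
  qed
  also have "\<dots> = pi\<^sup>2 * (dist x y)\<^sup>2"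
    by (simp add: dist_norm norm_sq_cart sum_distrib_left)
  finally show ?thesis .
qed

lemma gf_upper: "0 < e \<Longrightarrow> gf e y x \<le> pi * dist x y + e"
proof -
  assume e: "0 < e"
  have "gf e y x \<le> sqrt (psi y x) + sqrt (e\<^sup>2)"
    unfolding gf_def by (rule sqrt_add_le_add_sqrt) (auto simp: psi_nonneg)
  also have "sqrt (psi y x) \<le> sqrt (pi\<^sup>2 * (dist x y)\<^sup>2)" by (rule real_sqrt_le_mono[OF psi_upper])
  also have "\<dots> = pi * dist x y" by (simp add: real_sqrt_mult)
  finally show ?thesis using e by simp
qed

lemma max_point:
  fixes w :: "real^'n \<Rightarrow> real"
  assumes cont: "continuous_on UNIV w" and per: "Zd_periodic w"
  shows "\<exists>x0. (\<forall>i. \<bar>x0$i - y$i\<bar> \<le> 1/2) \<and> (\<forall>x. w x - K * gf e y x \<le> w x0 - K * gf e y x0)"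
proof -
  define c :: "real^'n" where "c = (\<chi> i. 1/2)"
  define S where "S = cbox (y - c) (y + c)"
  define \<Phi> where "\<Phi> x = w x - K * gf e y x" for x
  have cpsi: "continuous_on UNIV (psi y)"
    unfolding psi_def by (intro continuous_intros)
  have cP: "continuous_on S \<Phi>"
    unfolding \<Phi>_def gf_def
    by (intro continuous_intros continuous_on_subset[OF cont] continuous_on_subset[OF cpsi]) auto
  have yS: "y \<in> S" unfolding S_def mem_box_cart c_def by auto
  obtain x0 where x0: "x0 \<in> S" "\<And>x. x \<in> S \<Longrightarrow> \<Phi> x \<le> \<Phi> x0"
    using continuous_attains_sup[OF _ _ cP] yS unfolding S_def by (metis compact_cbox empty_iff)
  have glob: "\<Phi> x \<le> \<Phi> x0" for x
  proof -
    define z :: "real^'n" where "z = (\<chi> i. of_int \<lfloor>y$i - x$i + 1/2\<rfloor>)"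
    have zi: "\<forall>i. z $ i \<in> \<int>" unfolding z_def by simp
    have "x + z \<in> S" unfolding S_def mem_box_cart c_def z_def
    proof (intro allI conjI)
      fix i
      have "of_int \<lfloor>y$i - x$i + 1/2\<rfloor> \<le> y$i - x$i + 1/2" by (rule of_int_floor_le)
      moreover have "y$i - x$i + 1/2 < of_int \<lfloor>y$i - x$i + 1/2\<rfloor> + 1" by (rule real_of_int_floor_add_one_gt)
      ultimately have "y$i - 1/2 \<le> x$i + of_int \<lfloor>y$i - x$i + 1/2\<rfloor>"
        "x$i + of_int \<lfloor>y$i - x$i + 1/2\<rfloor> \<le> y$i + 1/2" by linarith+
      then show "(y - (\<chi> i. 1 / 2)) $ i \<le> (x + (\<chi> i. real_of_int \<lfloor>y $ i - x $ i + 1 / 2\<rfloor>)) $ i"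
        "(x + (\<chi> i. real_of_int \<lfloor>y $ i - x $ i + 1 / 2\<rfloor>)) $ i \<le> (y + (\<chi> i. 1 / 2)) $ i"
        by auto
    qed
    then have "\<Phi> (x + z) \<le> \<Phi> x0" by (rule x0(2))
    moreover have "\<Phi> (x + z) = \<Phi> x"
      unfolding \<Phi>_def gf_def using per zi psi_per[OF zi] unfolding Zd_periodic_def by simp
    ultimately show ?thesis by simp
  qed
  have "\<forall>i. \<bar>x0$i - y$i\<bar> \<le> 1/2"
  proof
    fix i
    have "(y - c)$i \<le> x0$i" "x0$i \<le> (y+c)$i" using x0(1) unfolding S_def mem_box_cart by auto
    then have a: "y$i - 1/2 \<le> x0$i" "x0$i \<le> y$i + 1/2" unfolding c_def by simp_all
    show "\<bar>x0$i - y$i\<bar> \<le> 1/2" unfolding abs_le_iff using a by linarith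
  qed
  then show ?thesis using glob unfolding \<Phi>_def by blast
qed

lemma key_step:
  fixes w :: "real^'n \<Rightarrow> real"
  assumes cont: "continuous_on UNIV w" and per: "Zd_periodic w" and bnd: "\<And>x. \<bar>w x\<bar> \<le> B"
    and R: "0 < R"
    and test: "\<And>phi Dphi x0. C1_torus phi Dphi \<Longrightarrow> (\<forall>x. w x - phi x \<le> w x0 - phi x0) \<Longrightarrow> norm (Dphi x0) \<le> R"
    and K: "K = 2*R + 8*B + 1"
    and e: "0 < e" "e \<le> 1/4"
  shows "\<exists>x0. (\<forall>i. \<bar>x0$i - y$i\<bar> \<le> 1/2) \<and> psi y x0 \<le> e\<^sup>2 \<and> (\<forall>x. w x - K * gf e y x \<le> w x0)"
proof -
  have B0: "0 \<le> B" using bnd[of y] by linarith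
  have Kpos: "0 < K" using K R B0 by linarith
  obtain x0 where x0b: "\<forall>i. \<bar>x0$i - y$i\<bar> \<le> 1/2" and mx: "\<And>x. w x - K * gf e y x \<le> w x0 - K * gf e y x0"
    using max_point[OF cont per, of y K e] by blast
  define g where "g = gf e y x0"
  have gpos: "0 < g" unfolding g_def by (rule gf_pos[OF e(1)])
  have "w y - K * e \<le> w x0 - K * g" using mx[of y] unfolding g_def gf_self[OF e(1)] by simp
  then have "K * g \<le> 2 * B + K * e" using bnd[of y] bnd[of x0] by (simp add: abs_le_iff)
  moreover have "2 * B \<le> K / 4" using K R by simp
  ultimately have "K * g \<le> K * (1/4 + e)" by (simp add: algebra_simps)
  then have "g \<le> 1/4 + e" using Kpos by simp
  then have g2: "g \<le> 1/2" using e by simp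
  have gsq: "g\<^sup>2 = psi y x0 + e\<^sup>2" unfolding g_def gf_def using psi_nonneg[of y x0] by simp
  have "g\<^sup>2 \<le> (1/2)\<^sup>2" using g2 gpos by (intro power_mono) auto
  then have "psi y x0 + e\<^sup>2 \<le> 1/4" using gsq by (simp add: power_divide)
  then have small: "psi y x0 \<le> 1/4" using zero_le_power2[of e] by linarith
  have C1: "C1_torus (\<lambda>x. K * gf e y x) (\<lambda>x. (K / (2 * gf e y x)) *\<^sub>R Dpsi y x)" by (rule C1_g[OF e(1)])
  have mx': "\<forall>x. w x - K * gf e y x \<le> w x0 - K * gf e y x0" using mx by blast
  have "norm ((K / (2 * g)) *\<^sub>R Dpsi y x0) \<le> R"
    using test[OF C1 mx'] unfolding g_def .
  then have "(norm ((K / (2 * g)) *\<^sub>R Dpsi y x0))\<^sup>2 \<le> R\<^sup>2" by (intro power_mono) auto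
  then have n1: "(K / (2 * g))\<^sup>2 * (norm (Dpsi y x0))\<^sup>2 \<le> R\<^sup>2"
    by (simp only: norm_scaleR power_mult_distrib power2_abs)
  have "(K / (2 * g))\<^sup>2 * (4 * psi y x0) \<le> (K / (2 * g))\<^sup>2 * (norm (Dpsi y x0))\<^sup>2"
    by (intro mult_left_mono Dpsi_lower small) auto
  with n1 have n2: "(K / (2 * g))\<^sup>2 * (4 * psi y x0) \<le> R\<^sup>2" by linarith
  have eq: "(K / (2 * g))\<^sup>2 * (4 * psi y x0) = K\<^sup>2 * psi y x0 / g\<^sup>2"
    by (simp add: power_divide power_mult_distrib)
  have g2pos: "0 < g\<^sup>2" using gpos by simp
  have kk: "K\<^sup>2 * psi y x0 \<le> R\<^sup>2 * g\<^sup>2" using n2 unfolding eq using g2pos by (simp add: pos_divide_le_eq)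
  have "4 * R\<^sup>2 \<le> K\<^sup>2"
  proof -
    have "(2*R)\<^sup>2 \<le> K\<^sup>2" using K R B0 by (intro power_mono) auto
    then show ?thesis by (simp add: power_mult_distrib)
  qed
  then have "4 * R\<^sup>2 * psi y x0 \<le> K\<^sup>2 * psi y x0" using psi_nonneg[of y x0] by (rule mult_right_mono)
  with kk gsq have "4 * R\<^sup>2 * psi y x0 \<le> R\<^sup>2 * (psi y x0 + e\<^sup>2)" by simp
  then have "R\<^sup>2 * (3 * psi y x0) \<le> R\<^sup>2 * e\<^sup>2" by (simp add: algebra_simps)
  then have "3 * psi y x0 \<le> e\<^sup>2" using R by simp
  then have "psi y x0 \<le> e\<^sup>2" using psi_nonneg[of y x0] by linarith
  moreover have "\<forall>x. w x - K * gf e y x \<le> w x0"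
  proof
    fix x
    have "0 \<le> K * g" using Kpos gpos by simp
    then show "w x - K * gf e y x \<le> w x0" using mx[of x] unfolding g_def by linarith
  qed
  ultimately show ?thesis using x0b by blast
qed

lemma sin_abs_pi: "\<bar>t\<bar> \<le> 1 \<Longrightarrow> sin (pi * \<bar>t\<bar>) = \<bar>sin (pi * t)\<bar>"
proof -
  assume t: "\<bar>t\<bar> \<le> 1"
  have nn: "0 \<le> sin (pi * \<bar>t\<bar>)" using t by (intro sin_ge_zero) auto
  show ?thesis
  proof (cases "0 \<le> t")
    case True then show ?thesis using nn by simp
  next
    case False then have "\<bar>t\<bar> = - t" by simp
    then show ?thesis using nn by (simp add: sin_minus)
  qed
qed

lemma lip_one:
  fixes w :: "real^'n \<Rightarrow> real"
  assumes cont: "continuous_on UNIV w" and per: "Zd_periodic w" and bnd: "\<And>x. \<bar>w x\<bar> \<le> B"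
    and R: "0 < R"
    and test: "\<And>phi Dphi x0. C1_torus phi Dphi \<Longrightarrow> (\<forall>x. w x - phi x \<le> w x0 - phi x0) \<Longrightarrow> norm (Dphi x0) \<le> R"
  shows "w x - w y \<le> (2*R + 8*B + 1) * pi * dist x y"
proof -
  define K where "K = 2*R + 8*B + 1"
  have B0: "0 \<le> B" using bnd[of y] by linarith
  have Kpos: "0 < K" using K_def R B0 by linarith
  have main: "w x - w y \<le> K * pi * dist x y + (K + 1) * \<eta>" if eta: "0 < \<eta>" for \<eta>
  proof -
    have "\<exists>d>0. \<forall>x'. dist x' y < d \<longrightarrow> dist (w x') (w y) < \<eta>"
      using cont eta unfolding continuous_on_iff by blast
    then obtain \<delta>1 where d1: "0 < \<delta>1" "\<And>x'. dist x' y < \<delta>1 \<Longrightarrow> dist (w x') (w y) < \<eta>"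
      by blast
    define n where "n = real CARD('n)"
    have npos: "0 < n" unfolding n_def by simp
    define \<delta> where "\<delta> = min (1/2) (\<delta>1 / (2 * n))"
    have dpos: "0 < \<delta>" unfolding \<delta>_def using d1 npos by simp
    have dle: "\<delta> \<le> 1/2" unfolding \<delta>_def by simp
    have "\<delta> \<le> \<delta>1 / (2 * n)" unfolding \<delta>_def by simp
    then have "n * \<delta> \<le> n * (\<delta>1 / (2 * n))" using npos by (intro mult_left_mono) auto
    also have "\<dots> = \<delta>1 / 2" using npos by simp
    finally have dn: "n * \<delta> \<le> \<delta>1 / 2" .
    define \<sigma> where "\<sigma> = sin (pi * \<delta>)"
    have spos: "0 < \<sigma>" unfolding \<sigma>_def using dpos dle by (intro sin_gt_zero) auto
    define \<epsilon> where "\<epsilon> = min (1/4) (min \<eta> (\<sigma>/2))"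
    have epos: "0 < \<epsilon>" unfolding \<epsilon>_def using eta spos by simp
    have ele: "\<epsilon> \<le> 1/4" "\<epsilon> \<le> \<eta>" "\<epsilon> \<le> \<sigma>/2" unfolding \<epsilon>_def by simp_all
    obtain x0 where x0b: "\<forall>i. \<bar>x0$i - y$i\<bar> \<le> 1/2" and ps: "psi y x0 \<le> \<epsilon>\<^sup>2"
      and mx: "\<forall>x. w x - K * gf \<epsilon> y x \<le> w x0"
    proof -
      have "\<exists>x0. (\<forall>i. \<bar>x0$i - y$i\<bar> \<le> 1/2) \<and> psi y x0 \<le> \<epsilon>\<^sup>2 \<and> (\<forall>x. w x - K * gf \<epsilon> y x \<le> w x0)"
        apply (rule key_step[where w=w and B=B and R=R and K=K and e=\<epsilon> and y=y])
               apply (rule cont)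
              apply (rule per)
             apply (rule bnd)
            apply (rule R)
           apply (rule test; assumption)
          apply (rule K_def)
         apply (rule epos)
        apply (rule ele(1))
        done
      then show ?thesis using that by blast
    qed
    have close: "\<bar>x0$i - y$i\<bar> < \<delta>" for i
    proof (rule ccontr)
      assume "\<not> \<bar>x0$i - y$i\<bar> < \<delta>"
      then have ge: "\<delta> \<le> \<bar>x0$i - y$i\<bar>" by simp
      define t where "t = x0$i - y$i"
      have tb: "\<bar>t\<bar> \<le> 1/2" unfolding t_def using x0b by blast
      have p1: "0 \<le> pi * \<delta>" using dpos by simp
      have p2: "0 \<le> pi * \<bar>t\<bar>" by simp
      have p3: "pi * \<delta> \<le> pi/2" using dle by simp
      have p4: "pi * \<bar>t\<bar> \<le> pi/2" using tb by simp
      have p5: "pi * \<delta> \<le> pi * \<bar>t\<bar>" using ge unfolding t_def by simp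
      have "\<sigma> \<le> sin (pi * \<bar>t\<bar>)" unfolding \<sigma>_def
        using sin_mono_le_eq[of "pi * \<delta>" "pi * \<bar>t\<bar>"] p1 p2 p3 p4 p5 pi_gt_zero by linarith
      also have "\<dots> = \<bar>sin (pi * t)\<bar>" using tb by (intro sin_abs_pi) simp
      finally have "\<sigma>\<^sup>2 \<le> \<bar>sin (pi * t)\<bar>\<^sup>2" using spos by (intro power_mono) auto
      also have "\<dots> \<le> psi y x0" unfolding t_def using term_le_psi[of x0 i y] by simp
      also have "\<dots> \<le> \<epsilon>\<^sup>2" by (rule ps)
      also have "\<dots> \<le> (\<sigma>/2)\<^sup>2" using ele epos by (intro power_mono) auto
      finally show False using spos by (simp add: power_divide)
    qed
    have "norm (x0 - y) \<le> (\<Sum>i\<in>UNIV. \<bar>(x0 - y)$i\<bar>)" by (rule norm_le_l1_cart)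
    also have "\<dots> \<le> (\<Sum>i\<in>(UNIV::'n set). \<delta>)" using close by (intro sum_mono) (simp add: less_imp_le)
    also have "\<dots> = n * \<delta>" unfolding n_def by simp
    finally have "dist x0 y < \<delta>1" using dn d1 by (simp add: dist_norm)
    then have wx0: "w x0 - w y < \<eta>" using d1(2) by (simp add: dist_real_def abs_less_iff)
    have "K * gf \<epsilon> y x \<le> K * (pi * dist x y + \<epsilon>)" using gf_upper[OF epos] Kpos by (simp add: mult_left_mono)
    also have "\<dots> \<le> K * pi * dist x y + K * \<eta>" using ele Kpos by (simp add: algebra_simps)
    finally have "K * gf \<epsilon> y x \<le> K * pi * dist x y + K * \<eta>" .
    moreover have "w x - K * gf \<epsilon> y x \<le> w x0" using mx by blast
    ultimately have "w x - w y \<le> K * pi * dist x y + K * \<eta> + \<eta>" using wx0 by linarith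
    then show ?thesis by (simp add: algebra_simps)
  qed
  show ?thesis unfolding K_def[symmetric]
  proof (rule field_le_epsilon)
    fix e :: real assume e: "0 < e"
    have "w x - w y \<le> K * pi * dist x y + (K + 1) * (e / (K + 1))" using main[of "e / (K+1)"] e Kpos by simp
    then show "w x - w y \<le> K * pi * dist x y + e" using Kpos by simp
  qed
qed

lemma coupling_bound:
  fixes v :: "real^'n \<Rightarrow> real \<Rightarrow> real"
  assumes Isets: "I \<in> sets lborel" and fin: "emeasure lborel I < \<infinity>" and meas: "measure lborel I = 1"
    and kb: "\<And>\<eta>. \<eta> \<in> I \<Longrightarrow> \<bar>k \<xi> \<eta>\<bar> \<le> k1" and vb: "\<And>\<eta>. \<eta> \<in> I \<Longrightarrow> \<bar>v x \<eta>\<bar> \<le> B"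
    and xi: "\<xi> \<in> I"
  shows "\<bar>coupling I k v x \<xi>\<bar> \<le> 2 * k1 * B"
proof -
  define f where "f \<eta> = indicator I \<eta> *\<^sub>R (k \<xi> \<eta> * (v x \<xi> - v x \<eta>))" for \<eta>
  define g where "g \<eta> = indicator I \<eta> * (2 * k1 * B)" for \<eta>
  have k10: "0 \<le> k1" using kb[OF xi] by linarith
  have B0: "0 \<le> B" using vb[OF xi] by linarith
  have c0: "0 \<le> 2 * k1 * B" using k10 B0 by simp
  have gint: "integrable lborel g" unfolding g_def
    using integrable_real_indicator[OF Isets fin] by (rule integrable_mult_left)
  have g0: "0 \<le> g \<eta>" for \<eta> unfolding g_def using c0 by simp
  have fg: "\<bar>f \<eta>\<bar> \<le> g \<eta>" for \<eta>
  proof (cases "\<eta> \<in> I")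
    case True
    have "\<bar>v x \<xi> - v x \<eta>\<bar> \<le> 2 * B" using vb[OF xi] vb[OF True] by linarith
    then have "\<bar>k \<xi> \<eta>\<bar> * \<bar>v x \<xi> - v x \<eta>\<bar> \<le> k1 * (2 * B)"
      using kb[OF True] by (intro mult_mono) auto
    then show ?thesis using True unfolding f_def g_def by (simp add: abs_mult)
  next
    case False then show ?thesis unfolding f_def g_def by simp
  qed
  have "\<bar>integral\<^sup>L lborel f\<bar> \<le> integral\<^sup>L lborel g"
  proof (cases "integrable lborel f")
    case True then show ?thesis using integral_abs_bound_integral[OF True gint] fg by blast
  next
    case False then show ?thesis using g0 by (simp add: not_integrable_integral_eq)
  qed
  also have "integral\<^sup>L lborel g = 2 * k1 * B"
    unfolding g_def using meas by simp
  finally show ?thesis unfolding coupling_def set_lebesgue_integral_def f_def .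
qed

theorem mainTheorem5:
  fixes H :: "real^'n \<Rightarrow> real^'n \<Rightarrow> real \<Rightarrow> real"
    and I :: "real set" and k :: "real \<Rightarrow> real \<Rightarrow> real"
    and k0 k1 C1 C2 m \<alpha> :: real
    and v :: "real^'n \<Rightarrow> real \<Rightarrow> real"
  assumes I_int: "is_interval I" "bounded I" "measure lborel I = 1"
    and k_meas: "set_borel_measurable borel (I \<times> I) (\<lambda>(\<xi>, \<eta>). k \<xi> \<eta>)"
    and k_bounds: "0 < k0" "\<And>\<xi> \<eta>. \<xi> \<in> I \<Longrightarrow> \<eta> \<in> I \<Longrightarrow> k0 \<le> k \<xi> \<eta> \<and> k \<xi> \<eta> \<le> k1"
    and H_cont: "\<And>\<xi>. \<xi> \<in> I \<Longrightarrow> continuous_on UNIV (\<lambda>(x, p). H x p \<xi>)"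
    and H_per: "\<And>\<xi> p. \<xi> \<in> I \<Longrightarrow> Zd_periodic (\<lambda>x. H x p \<xi>)"
    and H_meas: "\<And>x p. set_borel_measurable borel I (H x p)"
    and H_bdd: "\<And>p. bounded ((\<lambda>(x, \<xi>). H x p \<xi>) ` (UNIV \<times> I))"
    and B1: "0 < C1" "0 < C2" "1 < m"
      "\<And>x p \<xi>. \<xi> \<in> I \<Longrightarrow> C1 * norm p powr m - C2 \<le> H x p \<xi>"
    and B2: "\<And>R. 0 < R \<Longrightarrow> \<exists>\<omega>::real \<Rightarrow> real. (\<omega> \<longlongrightarrow> 0) (at_right 0) \<and>
              (\<forall>x y p \<xi>. \<xi> \<in> I \<and> norm p \<le> R \<longrightarrow> \<bar>H x p \<xi> - H y p \<xi>\<bar> \<le> \<omega> (dist x y))"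
    and alpha_pos: "0 < \<alpha>"
    and v_class: "C_tensor_B I v"
    and v_sol: "visc_sol \<alpha> H I k v"
    and v_bound: "\<And>x \<xi>. \<xi> \<in> I \<Longrightarrow>
        \<bar>v x \<xi>\<bar> \<le> (SUP z\<in>UNIV \<times> I. \<bar>H (fst z) 0 (snd z)\<bar>) / \<alpha>"
  shows "\<exists>L>0. \<forall>x y. \<forall>\<xi>\<in>I. \<bar>v x \<xi> - v y \<xi>\<bar> \<le> L * dist x y"
proof -
  define B where "B = (SUP z\<in>UNIV \<times> I. \<bar>H (fst z) 0 (snd z)\<bar>) / \<alpha>"
  have vb: "\<And>x \<xi>. \<xi> \<in> I \<Longrightarrow> \<bar>v x \<xi>\<bar> \<le> B" unfolding B_def by (rule v_bound)
  have Isets: "I \<in> sets lborel"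
    using I_int(3) measure_notin_sets[of I lborel] by fastforce
  have fin: "emeasure lborel I < \<infinity>"
    using I_int(3) measure_zero_top[of lborel I] top.not_eq_extremum by fastforce
  have Ine: "I \<noteq> {}" using I_int(3) by auto
  then obtain \<xi>0 where xi0: "\<xi>0 \<in> I" by blast
  have B0: "0 \<le> B" using vb[OF xi0, of 0] by linarith
  have k10: "0 \<le> k1" using k_bounds(2)[OF xi0 xi0] k_bounds(1) by linarith
  have kb: "\<And>\<xi> \<eta>. \<xi> \<in> I \<Longrightarrow> \<eta> \<in> I \<Longrightarrow> \<bar>k \<xi> \<eta>\<bar> \<le> k1"
    using k_bounds by (smt (verit))
  have cb: "\<And>x \<xi>. \<xi> \<in> I \<Longrightarrow> \<bar>coupling I k v x \<xi>\<bar> \<le> 2 * k1 * B"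
    by (rule coupling_bound[OF Isets fin I_int(3)]) (auto intro: kb vb)
  define Q where "Q = (\<alpha> * B + 2 * k1 * B + C2) / C1"
  define R where "R = max 1 Q"
  have R0: "0 < R" unfolding R_def by simp
  have test: "norm (Dphi x0) \<le> R"
    if xi: "\<xi> \<in> I" and C1t: "C1_torus phi Dphi" and mx: "\<forall>x. v x \<xi> - phi x \<le> v x0 \<xi> - phi x0"
    for \<xi> phi Dphi x0
  proof -
    have loc: "\<exists>e>0. \<forall>x\<in>ball x0 e. v x \<xi> - phi x \<le> v x0 \<xi> - phi x0"
      using mx by (intro exI[of _ 1]) auto
    have sub: "\<alpha> * v x0 \<xi> + H x0 (Dphi x0) \<xi> + coupling I k v x0 \<xi> \<le> 0"
      using v_sol xi C1t loc unfolding visc_sol_def visc_subsol_def by blast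
    have "\<alpha> * v x0 \<xi> \<ge> - (\<alpha> * B)"
    proof -
      have "- B \<le> v x0 \<xi>" using vb[OF xi, of x0] by linarith
      then have "\<alpha> * (- B) \<le> \<alpha> * v x0 \<xi>" using alpha_pos by (intro mult_left_mono) auto
      then show ?thesis by simp
    qed
    moreover have "coupling I k v x0 \<xi> \<ge> - (2 * k1 * B)" using cb[OF xi, of x0] by linarith
    ultimately have Hle: "H x0 (Dphi x0) \<xi> \<le> \<alpha> * B + 2 * k1 * B" using sub by linarith
    have "C1 * norm (Dphi x0) powr m \<le> \<alpha> * B + 2 * k1 * B + C2"
      using B1(4)[where x=x0 and p="Dphi x0", OF xi] Hle by linarith
    then have pm: "norm (Dphi x0) powr m \<le> Q" unfolding Q_def using B1(1)
      by (simp add: pos_le_divide_eq mult.commute)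
    show ?thesis
    proof (cases "norm (Dphi x0) \<le> 1")
      case True then show ?thesis unfolding R_def by simp
    next
      case False
      then have "norm (Dphi x0) powr 1 \<le> norm (Dphi x0) powr m"
        using B1(3) by (intro powr_mono) auto
      then have "norm (Dphi x0) \<le> Q" using pm False by simp
      then show ?thesis unfolding R_def by simp
    qed
  qed
  define L where "L = (2*R + 8*B + 1) * pi"
  have Lpos: "0 < L" unfolding L_def using R0 B0 by simp
  have one: "v x \<xi> - v y \<xi> \<le> L * dist x y" if xi: "\<xi> \<in> I" for x y \<xi>
  proof -
    have cont: "continuous_on UNIV (\<lambda>x. v x \<xi>)" and per: "Zd_periodic (\<lambda>x. v x \<xi>)"
      using v_class xi unfolding C_tensor_B_def by auto
    have "v x \<xi> - v y \<xi> \<le> (2*R + 8*B + 1) * pi * dist x y"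
      apply (rule lip_one[where w="\<lambda>x. v x \<xi>"])
          apply (rule cont)
         apply (rule per)
        apply (rule vb[OF xi])
       apply (rule R0)
      apply (rule test[OF xi]; assumption)
      done
    then show ?thesis unfolding L_def .
  qed
  show ?thesis
  proof (intro exI[of _ L] conjI allI ballI)
    show "0 < L" by (rule Lpos)
    fix x y \<xi> assume xi: "\<xi> \<in> I"
    show "\<bar>v x \<xi> - v y \<xi>\<bar> \<le> L * dist x y"
      using one[OF xi, of x y] one[OF xi, of y x] by (simp add: dist_commute abs_le_iff)
  qed
qed
end
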